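(* Let $(n_k)_{k\ge0}$ be a strictly increasing sequence of positive integers such that $n_k$ divides $n_{k+1}$ for every $k\ge0$, and let $(a_k)_{k\ge0}$ be a sequence of positive real numbers decreasing to $0$ with $\sum_{k\ge0}a_k=+\infty$. Then there exists a continuous Borel probability measure $\sigma$ on $\mathbb{T}$ such that $|\hat\sigma(n_k)-1|\le a_k$ for every $k\ge0$.
   Context: $\hat\sigma(n)=\int_{\mathbb{T}}\lambda^n\,d\sigma(\lambda)$; continuous means atomless. *)

theory Defs
  imports "HOL-Probability.Probability"
begin

definition circleT :: "complex set" where
  "circleT = sphere 0 1"

definition borel_prob_on_T :: "complex measure \<Rightarrow> bool" where
  "borel_prob_on_T M \<longleftrightarrow> prob_space M \<and> sets M = sets borel \<and> emeasure M circleT = 1"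

text \<open>Continuous = atomless.\<close>
definition atomless :: "complex measure \<Rightarrow> bool" where
  "atomless M \<longleftrightarrow> (\<forall>x. emeasure M {x} = 0)"

definition fourier_coeff :: "complex measure \<Rightarrow> nat \<Rightarrow> complex" where
  "fourier_coeff M n = integral\<^sup>L M (\<lambda>z. z ^ n)"

end

theory Submission
  imports Defs
begin

locale constr =
  fixes n :: "nat \<Rightarrow> nat" and a :: "nat \<Rightarrow> real"
  assumes nmono: "strict_mono n" and npos: "\<And>k. n k > 0" and ndvd: "\<And>k. n k dvd n (Suc k)"
   and apos: "\<And>k. a k > 0" and adec: "decseq a" and alim: "a \<longlonglongrightarrow> 0" and adiv: "\<not> summable a"
begin

definition p where "p j = min (1/2) (a j / 7)"
definition Mb where "Mb j = measure_pmf (bernoulli_pmf (p j))"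
definition d where "d j = 1 / real (n j)"
definition PP where "PP = PiM UNIV Mb"
definition t where "t \<omega> = (\<Sum>j. if \<omega> j then d j else 0)"
definition lam where "lam \<omega> = iexp (2*pi * t \<omega>)"
definition sig where "sig = distr PP borel lam"

lemma n_dvd: "i \<le> j \<Longrightarrow> n i dvd n j"
proof (induction j rule: dec_induct)
  case (step m) then show ?case using ndvd dvd_trans by blast
qed simp

lemma n_step: "2 * n k \<le> n (Suc k)"
proof -
  obtain m where m: "n (Suc k) = n k * m" using ndvd by (meson dvdE)
  have "n k < n (Suc k)" using nmono by (simp add: strict_mono_Suc_iff)
  have "\<not> m \<le> 1"
  proof
    assume "m \<le> 1"
    then have "n k * m \<le> n k * 1" by (rule mult_le_mono2)
    then show False using \<open>n k < n (Suc k)\<close> m by simp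
  qed
  then have "m \<ge> 2" by simp
  then show ?thesis using m by (metis mult.commute mult_le_mono2)
qed

lemma n_geo: "i \<le> j \<Longrightarrow> 2^(j-i) * n i \<le> n j"
proof (induction j rule: dec_induct)
  case (step m)
  have "2^(Suc m - i) * n i = 2 * (2^(m-i) * n i)" using step(1) by (simp add: Suc_diff_le)
  also have "\<dots> \<le> 2 * n m" using step by simp
  also have "\<dots> \<le> n (Suc m)" by (rule n_step)
  finally show ?case .
qed simp

lemma n_ge: "2^j \<le> n j"
proof -
  have "2^(j-0) * n 0 \<le> n j" by (rule n_geo) simp
  moreover have "n 0 \<ge> 1" using npos[of 0] by simp
  ultimately show ?thesis by (metis diff_zero le_trans mult_le_mono2 mult.right_neutral)
qed

lemma d_pos: "d j > 0" using npos by (simp add: d_def)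

lemma d_le: "d j \<le> (1/2)^j"
proof -
  have "real (2^j) \<le> real (n j)" by (rule of_nat_mono[OF n_ge])
  then show ?thesis unfolding d_def power_one_over using npos[of j] by (intro divide_left_mono) auto
qed

lemma nd_le: "k \<le> j \<Longrightarrow> real (n k) * d j \<le> (1/2)^(j-k)"
proof -
  assume kj: "k \<le> j"
  have "real (2^(j-k) * n k) \<le> real (n j)" by (rule of_nat_mono[OF n_geo[OF kj]])
  then show ?thesis using npos[of j] unfolding d_def by (simp add: power_one_over field_simps)
qed

lemma d_half: "j \<ge> 1 \<Longrightarrow> d j \<le> 1/2"
proof -
  assume "j \<ge> 1"
  then have "(1/2::real)^j \<le> (1/2)^1" by (intro power_decreasing) auto
  then show ?thesis using d_le[of j] by simp
qed

lemma p_pos: "p j > 0" using apos[of j] by (simp add: p_def)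
lemma p_half: "p j \<le> 1/2" by (simp add: p_def)
lemma p_le: "2 * pi * p j \<le> a j"
proof -
  have "p j \<le> a j / 7" by (simp add: p_def)
  moreover have "pi \<le> 7/2" using pi_approx by simp
  ultimately have "2 * pi * p j \<le> 2 * (7/2) * (a j / 7)" using p_pos[of j] pi_gt_zero
    by (intro mult_mono) auto
  then show ?thesis by simp
qed
lemma p_dec: "k \<le> j \<Longrightarrow> p j \<le> p k"
proof -
  assume "k \<le> j"
  then have "a j \<le> a k" using adec by (simp add: decseq_def)
  then show ?thesis unfolding p_def by linarith
qed


lemma PS: "product_prob_space Mb"
  unfolding product_prob_space_def product_sigma_finite_def product_prob_space_axioms_def Mb_def
  by (auto intro!: prob_space_measure_pmf prob_space_imp_sigma_finite)

sublocale PS: product_prob_space Mb UNIV by (rule PS)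

lemma prob_PP: "prob_space PP" unfolding PP_def by unfold_locales

lemma space_PP: "space PP = UNIV"
  unfolding PP_def space_PiM Mb_def by auto

lemma sets_Mb[simp]: "sets (Mb j) = UNIV" unfolding Mb_def by simp

lemma coord_meas[measurable]: "(\<lambda>\<omega>. \<omega> j) \<in> measurable PP (count_space UNIV)"
proof -
  have "(\<lambda>\<omega>. \<omega> j) \<in> measurable PP (Mb j)" unfolding PP_def by (rule measurable_component_singleton) simp
  then show ?thesis using measurable_cong_sets[of PP PP "Mb j" "count_space UNIV"] by simp
qed

lemma term_meas[measurable]: "(\<lambda>\<omega>. if \<omega> j then (c::real) else 0) \<in> borel_measurable PP"
proof -
  have "(\<lambda>b::bool. if b then c else 0) \<in> borel_measurable (count_space UNIV)" by simp
  from measurable_comp[OF coord_meas this] show ?thesis by (simp add: o_def)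
qed

lemma summ: "summable (\<lambda>j. if \<omega> j then d j else 0)"
proof (rule summable_comparison_test[where g="\<lambda>j. (1/2::real)^j"])
  show "\<exists>N. \<forall>j\<ge>N. norm (if \<omega> j then d j else 0) \<le> (1/2)^j"
    using d_le d_pos by (auto intro!: exI[of _ 0] simp: less_imp_le)
qed simp

lemma t_meas[measurable]: "t \<in> borel_measurable PP"
  unfolding t_def[abs_def] by measurable

lemma lam_meas[measurable]: "lam \<in> borel_measurable PP"
  unfolding lam_def[abs_def] by measurable

lemma lam_norm: "cmod (lam \<omega>) = 1"
  unfolding lam_def by simp

lemma sig_prob: "borel_prob_on_T sig"
proof -
  interpret P: prob_space PP by (rule prob_PP)
  have "prob_space sig" unfolding sig_def by (rule P.prob_space_distr) simp
  moreover have "sets sig = sets borel" unfolding sig_def by simp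
  moreover have "emeasure sig circleT = 1"
  proof -
    have "circleT \<in> sets borel" unfolding circleT_def by simp
    then have "emeasure sig circleT = emeasure PP (lam -` circleT \<inter> space PP)"
      unfolding sig_def by (simp add: emeasure_distr)
    also have "lam -` circleT \<inter> space PP = space PP"
      using lam_norm unfolding circleT_def by auto
    finally show ?thesis using P.emeasure_space_1 by simp
  qed
  ultimately show ?thesis unfolding borel_prob_on_T_def by simp
qed


lemma coll_sets[measurable]: "{\<omega>. \<forall>i\<in>J. \<omega> i \<in> X i} \<in> sets PP" if "finite J"
proof -
  have "{\<omega>. \<forall>i\<in>J. \<omega> i \<in> X i} = {\<omega>\<in>space PP. \<forall>i\<in>J. \<omega> i \<in> X i}" using space_PP by simp
  also have "\<dots> \<in> sets PP"
  proof -
    have "Measurable.pred PP (\<lambda>\<omega>. \<forall>i\<in>J. \<omega> i \<in> X i)"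
    proof (intro pred_intros_finite that)
      fix i
      have "(\<lambda>\<omega>. \<omega> i) -` X i \<inter> space PP \<in> sets PP" using measurable_sets[OF coord_meas[of i], of "X i"] by simp
      moreover have "(\<lambda>\<omega>. \<omega> i) -` X i \<inter> space PP = {\<omega>\<in>space PP. \<omega> i \<in> X i}" by auto
      ultimately show "Measurable.pred PP (\<lambda>\<omega>. \<omega> i \<in> X i)" unfolding pred_def by simp
    qed
    then show ?thesis by simp
  qed
  finally show ?thesis .
qed

lemma emeasure_coll: "finite J \<Longrightarrow> emeasure PP {\<omega>. \<forall>i\<in>J. \<omega> i \<in> X i} = (\<Prod>i\<in>J. emeasure (Mb i) (X i))"
proof -
  assume J: "finite J"
  have "{\<omega>. \<forall>i\<in>J. \<omega> i \<in> X i} = {\<omega>\<in>space (PiM UNIV Mb). \<forall>i\<in>J. \<omega> i \<in> X i}" using space_PP PP_def by simp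
  then show ?thesis unfolding PP_def using J by (simp add: PS.emeasure_PiM_Collect)
qed

lemma pmf_Mb: "emeasure (Mb j) {b} = ennreal (if b then p j else 1 - p j)"
  unfolding Mb_def using p_pos[of j] p_half[of j]
  by (cases b) (auto simp: emeasure_pmf_single)

lemma measure_single: "measure PP {\<omega>. \<omega> j} = p j"
proof -
  have "emeasure PP {\<omega>. \<forall>i\<in>{j}. \<omega> i \<in> {True}} = ennreal (p j)"
    by (subst emeasure_coll) (auto simp: pmf_Mb)
  moreover have "{\<omega>. \<forall>i\<in>{j}. \<omega> i \<in> {True}} = {\<omega>. \<omega> j}" by auto
  ultimately have "emeasure PP {\<omega>. \<omega> j} = ennreal (p j)" by simp
  then show ?thesis unfolding measure_def using p_pos[of j] by simp
qed

lemma term_int: "integral\<^sup>L PP (\<lambda>\<omega>. if \<omega> j then c else 0) = c * p j"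
proof -
  have "(\<lambda>\<omega>. if \<omega> j then c else 0) = (\<lambda>\<omega>. c * indicator {\<omega>. \<omega> j} \<omega>)"
    by (auto simp: indicator_def)
  then show ?thesis using space_PP measure_single by simp
qed

lemma cis_approx: "cmod (cis x - 1) \<le> \<bar>x\<bar>"
  using iexp_approx1[of x 0] by (simp add: cis_conv_exp)

lemma int_part: "real (n k) * (\<Sum>i<Suc k. if \<omega> i then d i else 0) \<in> \<int>"
proof -
  have "real (n k) * (\<Sum>i<Suc k. if \<omega> i then d i else 0) = (\<Sum>i<Suc k. if \<omega> i then real (n k) * d i else 0)"
    unfolding sum_distrib_left by (rule sum.cong) auto
  also have "\<dots> \<in> \<int>"
  proof (rule Ints_sum)
    fix i assume "i \<in> {..<Suc k}"
    then have "i \<le> k" by simp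
    then obtain q where q: "n k = n i * q" using n_dvd by (meson dvdE)
    then have "real (n k) * d i = real q" unfolding d_def using npos[of i] by simp
    then show "(if \<omega> i then real (n k) * d i else 0) \<in> \<int>" by simp
  qed
  finally show ?thesis .
qed

definition T2 where "T2 k \<omega> = (\<Sum>i. if \<omega> (i + Suc k) then d (i + Suc k) else 0)"

lemma T2_meas[measurable]: "T2 k \<in> borel_measurable PP"
  unfolding T2_def[abs_def] by measurable

lemma summ2: "summable (\<lambda>i. if \<omega> (i + Suc k) then d (i + Suc k) else 0)"
  using summable_ignore_initial_segment[OF summ[of \<omega>], of "Suc k"] by simp

lemma T2_nonneg: "T2 k \<omega> \<ge> 0"
  unfolding T2_def using d_pos by (intro suminf_nonneg summ2) (auto simp: less_imp_le)

lemma lam_pow: "lam \<omega> ^ n k = cis (2 * pi * (real (n k) * T2 k \<omega>))"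
proof -
  define T1 where "T1 = (\<Sum>i<Suc k. if \<omega> i then d i else 0)"
  have split: "t \<omega> = T2 k \<omega> + T1"
    unfolding t_def T2_def T1_def by (rule suminf_split_initial_segment[OF summ])
  have "lam \<omega> = cis (2 * pi * t \<omega>)" unfolding lam_def by (simp add: cis_conv_exp mult.commute)
  then have "lam \<omega> ^ n k = cis (real (n k) * (2 * pi * t \<omega>))" by (simp add: Complex.DeMoivre)
  also have "real (n k) * (2 * pi * t \<omega>) = 2 * pi * (real (n k) * T2 k \<omega>) + 2 * pi * (real (n k) * T1)"
    by (simp add: split algebra_simps)
  also have "cis \<dots> = cis (2 * pi * (real (n k) * T2 k \<omega>)) * cis (2 * pi * (real (n k) * T1))"
    by (simp add: cis_mult)
  also have "cis (2 * pi * (real (n k) * T1)) = 1"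
    using int_part[of k \<omega>] unfolding T1_def by (rule cis_multiple_2pi)
  finally show ?thesis by simp
qed


lemma T2_int: "integrable PP (T2 k)" and T2_integral: "integral\<^sup>L PP (T2 k) = (\<Sum>i. d (i + Suc k) * p (i + Suc k))"
proof -
  interpret P: prob_space PP by (rule prob_PP)
  let ?f = "\<lambda>i \<omega>. if \<omega> (i + Suc k) then d (i + Suc k) else 0"
  have fi: "integrable PP (?f i)" for i
    by (rule P.integrable_const_bound[where B="d (i + Suc k)"]) (auto simp: less_imp_le[OF d_pos])
  have ints: "integral\<^sup>L PP (?f i) = d (i + Suc k) * p (i + Suc k)" for i by (rule term_int)
  have nrm: "norm (?f i \<omega>) = ?f i \<omega>" for i \<omega> using d_pos[of "i + Suc k"] by auto
  have s1: "AE \<omega> in PP. summable (\<lambda>i. norm (?f i \<omega>))" unfolding nrm using summ2 by simp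
  have s2: "summable (\<lambda>i. d (i + Suc k) * p (i + Suc k))"
  proof (rule summable_comparison_test[where g="\<lambda>i. (1/2::real)^(i + Suc k)"])
    show "\<exists>N. \<forall>i\<ge>N. norm (d (i + Suc k) * p (i + Suc k)) \<le> (1/2)^(i + Suc k)"
    proof (intro exI allI impI)
      fix i
      have A: "d (i + Suc k) \<le> (1/2)^(i + Suc k)" "p (i + Suc k) \<le> 1" "0 \<le> p (i + Suc k)"
        using d_le[of "i + Suc k"] p_half[of "i + Suc k"] p_pos[of "i + Suc k"] by auto
      have "d (i + Suc k) * p (i + Suc k) \<le> (1/2)^(i + Suc k) * 1"
        by (rule mult_mono[OF A(1) A(2)]) (use A(3) in auto)
      then show "norm (d (i + Suc k) * p (i + Suc k)) \<le> (1/2)^(i + Suc k)"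
        using d_pos[of "i + Suc k"] p_pos[of "i + Suc k"] by simp
    qed
    show "summable (\<lambda>i. (1/2::real)^(i + Suc k))"
      by (rule summable_ignore_initial_segment) simp
  qed
  have s2': "summable (\<lambda>i. integral\<^sup>L PP (\<lambda>\<omega>. norm (?f i \<omega>)))" unfolding nrm ints using s2 by simp
  show "integrable PP (T2 k)" unfolding T2_def[abs_def]
    by (rule integrable_suminf[OF fi s1 s2'])
  show "integral\<^sup>L PP (T2 k) = (\<Sum>i. d (i + Suc k) * p (i + Suc k))" unfolding T2_def[abs_def]
    using integral_suminf[OF fi s1 s2'] ints by simp
qed

lemma series_bound: "real (n k) * (\<Sum>i. d (i + Suc k) * p (i + Suc k)) \<le> p k"
proof -
  have s2: "summable (\<lambda>i. d (i + Suc k) * p (i + Suc k))"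
  proof (rule summable_comparison_test[where g="\<lambda>i. (1/2::real)^(i + Suc k)"])
    show "\<exists>N. \<forall>i\<ge>N. norm (d (i + Suc k) * p (i + Suc k)) \<le> (1/2)^(i + Suc k)"
    proof (intro exI allI impI)
      fix i
      have A: "d (i + Suc k) \<le> (1/2)^(i + Suc k)" "p (i + Suc k) \<le> 1" "0 \<le> p (i + Suc k)"
        using d_le[of "i + Suc k"] p_half[of "i + Suc k"] p_pos[of "i + Suc k"] by auto
      have "d (i + Suc k) * p (i + Suc k) \<le> (1/2)^(i + Suc k) * 1"
        by (rule mult_mono[OF A(1) A(2)]) (use A(3) in auto)
      then show "norm (d (i + Suc k) * p (i + Suc k)) \<le> (1/2)^(i + Suc k)"
        using d_pos[of "i + Suc k"] p_pos[of "i + Suc k"] by simp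
    qed
    show "summable (\<lambda>i. (1/2::real)^(i + Suc k))"
      by (rule summable_ignore_initial_segment) simp
  qed
  have geo: "(\<lambda>i. (1/2::real)^i) sums 2" using geometric_sums[of "1/2::real"] by simp
  then have geo2: "(\<lambda>i. p k * ((1/2::real) * (1/2)^i)) sums (p k * ((1/2) * 2))"
    by (intro sums_mult sums_mult)
  have "real (n k) * (\<Sum>i. d (i + Suc k) * p (i + Suc k)) = (\<Sum>i. real (n k) * (d (i + Suc k) * p (i + Suc k)))"
    using s2 by (rule suminf_mult[symmetric])
  also have "\<dots> \<le> (\<Sum>i. p k * ((1/2::real) * (1/2)^i))"
  proof (rule suminf_le)
    fix i
    have "real (n k) * d (i + Suc k) \<le> (1/2)^(i + Suc k - k)" by (rule nd_le) simp
    then have "real (n k) * d (i + Suc k) \<le> (1/2) * (1/2)^i" by simp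
    moreover have "p (i + Suc k) \<le> p k" by (rule p_dec) simp
    ultimately have "(real (n k) * d (i + Suc k)) * p (i + Suc k) \<le> ((1/2) * (1/2)^i) * p k"
    proof (rule mult_mono)
      show "0 \<le> (1/2::real) * (1/2)^i" by simp
      show "0 \<le> p (i + Suc k)" using p_pos[of "i + Suc k"] by simp
    qed
    then show "real (n k) * (d (i + Suc k) * p (i + Suc k)) \<le> p k * ((1/2::real) * (1/2)^i)"
      by (simp add: ac_simps)
    show "summable (\<lambda>i. real (n k) * (d (i + Suc k) * p (i + Suc k)))" using s2 by (rule summable_mult)
    show "summable (\<lambda>i. p k * ((1/2::real) * (1/2)^i))" using geo2 by (rule sums_summable)
  qed
  also have "\<dots> = p k" using geo2 by (simp add: sums_iff)
  finally show ?thesis .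
qed

lemma fourier_bound: "cmod (fourier_coeff sig (n k) - 1) \<le> a k"
proof -
  interpret P: prob_space PP by (rule prob_PP)
  let ?g = "\<lambda>\<omega>. cis (2*pi*(real (n k) * T2 k \<omega>))"
  have g_meas: "?g \<in> borel_measurable PP" unfolding cis_conv_exp by measurable
  have "fourier_coeff sig (n k) = integral\<^sup>L PP (\<lambda>\<omega>. lam \<omega> ^ n k)"
    unfolding fourier_coeff_def sig_def by (rule integral_distr) auto
  also have "\<dots> = integral\<^sup>L PP ?g" using lam_pow by simp
  finally have F: "fourier_coeff sig (n k) = integral\<^sup>L PP ?g" .
  have gi: "integrable PP ?g" by (rule P.integrable_const_bound[where B=1]) (auto simp: g_meas)
  have "fourier_coeff sig (n k) - 1 = integral\<^sup>L PP (\<lambda>\<omega>. ?g \<omega> - 1)"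
    using F gi by (simp add: P.prob_space)
  then have "cmod (fourier_coeff sig (n k) - 1) \<le> integral\<^sup>L PP (\<lambda>\<omega>. cmod (?g \<omega> - 1))"
    by (simp add: integral_norm_bound)
  also have "\<dots> \<le> integral\<^sup>L PP (\<lambda>\<omega>. 2*pi*real (n k) * T2 k \<omega>)"
  proof (rule integral_mono)
    show "integrable PP (\<lambda>\<omega>. cmod (?g \<omega> - 1))"
    proof (rule P.integrable_const_bound[where B=2])
      show "(\<lambda>\<omega>. cmod (?g \<omega> - 1)) \<in> borel_measurable PP" using g_meas by measurable
      show "AE \<omega> in PP. norm (cmod (?g \<omega> - 1)) \<le> 2"
        using norm_triangle_ineq4[of "?g _" 1] by (auto intro!: AE_I2)
    qed
    show "integrable PP (\<lambda>\<omega>. 2*pi*real (n k) * T2 k \<omega>)" using T2_int by simp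
    fix \<omega>
    have "cmod (?g \<omega> - 1) \<le> \<bar>2*pi*(real (n k) * T2 k \<omega>)\<bar>" by (rule cis_approx)
    also have "\<dots> = 2*pi*real (n k) * T2 k \<omega>" using T2_nonneg[of k \<omega>] by (simp add: abs_mult)
    finally show "cmod (?g \<omega> - 1) \<le> 2*pi*real (n k) * T2 k \<omega>" .
  qed
  also have "\<dots> = 2*pi * (real (n k) * (\<Sum>i. d (i + Suc k) * p (i + Suc k)))"
    using T2_integral by simp
  also have "\<dots> \<le> 2*pi * p k" using series_bound by simp
  also have "\<dots> \<le> a k" by (rule p_le)
  finally show ?thesis .
qed


lemma d_rel: "m \<le> j \<Longrightarrow> d j \<le> d m * (1/2)^(j-m)"
proof -
  assume "m \<le> j"
  then have "real (n m) * d j \<le> (1/2)^(j-m)" by (rule nd_le)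
  then show ?thesis using npos[of m] unfolding d_def by (simp add: field_simps)
qed

lemma tail_sum: "m \<le> N \<Longrightarrow> (\<Sum>i\<in>{m<..N}. d i) \<le> d m * (1 - (1/2)^(N - m))"
proof (induction N rule: dec_induct)
  case base then show ?case by simp
next
  case (step N)
  have "{m<..Suc N} = insert (Suc N) {m<..N}" using step(1) by auto
  then have "(\<Sum>i\<in>{m<..Suc N}. d i) = d (Suc N) + (\<Sum>i\<in>{m<..N}. d i)" by simp
  also have "\<dots> \<le> d m * (1/2)^(Suc N - m) + d m * (1 - (1/2)^(N - m))"
  proof -
    have "m \<le> Suc N" using step(1) by simp
    then show ?thesis using d_rel[of m "Suc N"] step(3) by simp
  qed
  also have "(1/2::real)^(N - m) = 2 * (1/2)^(Suc N - m)" using step(1) by (simp add: Suc_diff_le)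
  finally show ?case by (simp add: algebra_simps)
qed

lemma tail_lt: "finite S \<Longrightarrow> (\<And>i. i \<in> S \<Longrightarrow> m < i) \<Longrightarrow> (\<Sum>i\<in>S. d i) < d m"
proof -
  assume S: "finite S" and gt: "\<And>i. i \<in> S \<Longrightarrow> m < i"
  show ?thesis
  proof (cases "S = {}")
    case True then show ?thesis using d_pos by simp
  next
    case False
    let ?N = "Max S"
    have mN: "m \<le> ?N" using gt[of ?N] Max_in[OF S False] by simp
    have "S \<subseteq> {m<..?N}" using gt S by auto
    then have "(\<Sum>i\<in>S. d i) \<le> (\<Sum>i\<in>{m<..?N}. d i)"
      by (intro sum_mono2) (auto simp: less_imp_le[OF d_pos])
    also have "\<dots> \<le> d m * (1 - (1/2)^(?N - m))" by (rule tail_sum[OF mN])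
    also have "\<dots> < d m" using d_pos[of m] by simp
    finally show ?thesis .
  qed
qed

lemma sdiff:
  assumes J: "finite J" "\<And>i. i \<in> J \<Longrightarrow> 1 \<le> i" and i0: "i0 \<in> J" "c i0 \<noteq> c' i0"
  shows "(\<Sum>i\<in>J. (if c i then d i else 0)) - (\<Sum>i\<in>J. (if c' i then d i else 0)) \<notin> \<int>"
proof
  define D where "D i = (if c i then d i else 0) - (if c' i then d i else 0)" for i
  define K where "K = {i\<in>J. c i \<noteq> c' i}"
  have K: "finite K" "K \<noteq> {}" using J i0 unfolding K_def by auto
  define m where "m = Min K"
  have mK: "m \<in> K" unfolding m_def using Min_in[OF K] .
  have mJ: "m \<in> J" and cm: "c m \<noteq> c' m" using mK unfolding K_def by auto
  have below: "D i = 0" if "i \<in> J" "i < m" for i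
  proof -
    have "i \<notin> K" using Min_le[OF K(1)] that unfolding m_def by force
    then show ?thesis using that unfolding K_def D_def by auto
  qed
  assume Z: "(\<Sum>i\<in>J. (if c i then d i else 0)) - (\<Sum>i\<in>J. (if c' i then d i else 0)) \<in> \<int>"
  have "(\<Sum>i\<in>J. (if c i then d i else 0)) - (\<Sum>i\<in>J. (if c' i then d i else 0)) = (\<Sum>i\<in>J. D i)"
    unfolding D_def by (simp add: sum_subtractf)
  also have "\<dots> = (\<Sum>i\<in>{i\<in>J. i < m} \<union> insert m {i\<in>J. m < i}. D i)"
  proof -
    have Jeq: "J = {i\<in>J. i < m} \<union> insert m {i\<in>J. m < i}" using mJ by auto
    show ?thesis using arg_cong[OF Jeq, of "sum D"] .
  qed
  also have "\<dots> = (\<Sum>i\<in>{i\<in>J. i < m}. D i) + (D m + (\<Sum>i\<in>{i\<in>J. m < i}. D i))"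
    using J(1) by (subst sum.union_disjoint) auto
  also have "(\<Sum>i\<in>{i\<in>J. i < m}. D i) = 0" using below by simp
  finally have eq: "(\<Sum>i\<in>J. (if c i then d i else 0)) - (\<Sum>i\<in>J. (if c' i then d i else 0)) = D m + (\<Sum>i\<in>{i\<in>J. m < i}. D i)" by simp
  have "\<bar>\<Sum>i\<in>{i\<in>J. m < i}. D i\<bar> \<le> (\<Sum>i\<in>{i\<in>J. m < i}. \<bar>D i\<bar>)" by (rule sum_abs)
  also have "\<dots> \<le> (\<Sum>i\<in>{i\<in>J. m < i}. d i)"
    by (intro sum_mono) (auto simp: D_def less_imp_le[OF d_pos])
  also have "\<dots> < d m" using J(1) by (intro tail_lt) auto
  finally have r: "\<bar>\<Sum>i\<in>{i\<in>J. m < i}. D i\<bar> < d m" .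
  have Dm: "\<bar>D m\<bar> = d m" using cm unfolding D_def using d_pos[of m] by (cases "c m") auto
  have dm: "d m \<le> 1/2" using J(2)[OF mJ] by (rule d_half)
  define r0 where "r0 = D m + (\<Sum>i\<in>{i\<in>J. m < i}. D i)"
  have "r0 \<in> \<int>" using Z eq r0_def by simp
  moreover have "0 < \<bar>r0\<bar>" "\<bar>r0\<bar> < 1" unfolding r0_def using r Dm dm by linarith+
  ultimately show False
  proof -
    assume "r0 \<in> \<int>" "0 < \<bar>r0\<bar>" "\<bar>r0\<bar> < 1"
    then obtain z :: int where z: "r0 = of_int z" by (auto elim: Ints_cases)
    then have "0 < \<bar>z\<bar>" "\<bar>z\<bar> < 1" using \<open>0 < \<bar>r0\<bar>\<close> \<open>\<bar>r0\<bar> < 1\<close> by linarith+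
    then show False by linarith
  qed
qed

lemma cis_inj: fixes uu vv :: real shows "cis (2 * pi * uu) = cis (2 * pi * vv) \<Longrightarrow> uu - vv \<in> \<int>"
proof -
  assume "cis (2 * pi * uu) = cis (2 * pi * vv)"
  then have "cis (2 * pi * uu) / cis (2 * pi * vv) = 1" by simp
  then have "cis (2 * pi * (uu - vv)) = 1" by (simp add: cis_divide algebra_simps)
  then have "cos (2 * pi * (uu - vv)) = 1" by (metis cis.sel(1) one_complex.sel(1))
  then obtain k :: int where "2 * pi * (uu - vv) = k * 2 * pi" using cos_one_2pi_int by auto
  then have "uu - vv = k" by simp
  then show ?thesis by simp
qed


definition tout where "tout J \<omega> = (\<Sum>j. if j \<notin> J \<and> \<omega> j then d j else 0)"
definition sJ where "sJ J c = (\<Sum>i\<in>J. if c i then d i else 0)"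

lemma t_split: "finite J \<Longrightarrow> t \<omega> = sJ J \<omega> + tout J \<omega>"
proof -
  assume J: "finite J"
  let ?f1 = "\<lambda>j. if j \<in> J \<and> \<omega> j then d j else 0"
  let ?f2 = "\<lambda>j. if j \<notin> J \<and> \<omega> j then d j else 0"
  have s1: "suminf ?f1 = (\<Sum>j\<in>J. ?f1 j)" by (rule suminf_finite[OF J]) auto
  have "summable ?f1" by (rule summable_finite[OF J]) auto
  moreover have "summable ?f2"
  proof (rule summable_comparison_test[OF _ summ[of \<omega>]])
    show "\<exists>N. \<forall>j\<ge>N. norm (?f2 j) \<le> (if \<omega> j then d j else 0)"
      using d_pos by (auto simp: less_imp_le)
  qed
  ultimately have "suminf (\<lambda>j. ?f1 j + ?f2 j) = suminf ?f1 + suminf ?f2" by (rule suminf_add[symmetric])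
  moreover have "(\<lambda>j. ?f1 j + ?f2 j) = (\<lambda>j. if \<omega> j then d j else 0)" by auto
  ultimately have "t \<omega> = suminf ?f1 + suminf ?f2" unfolding t_def by simp
  moreover have "(\<Sum>j\<in>J. ?f1 j) = sJ J \<omega>" unfolding sJ_def by (rule sum.cong) simp_all
  ultimately show ?thesis unfolding tout_def s1 by simp
qed

lemma indep_coords: "prob_space.indep_vars PP Mb (\<lambda>i \<omega>. \<omega> i) UNIV"
proof -
  interpret P: prob_space PP by (rule prob_PP)
  have rv: "\<And>i. P.random_variable (Mb i) (\<lambda>\<omega>. \<omega> i)"
    unfolding PP_def by (rule measurable_component_singleton) simp
  have "(\<lambda>x. \<lambda>i\<in>UNIV. x i) = (\<lambda>x::nat\<Rightarrow>bool. x)" by (auto simp: restrict_def)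
  then have "distr PP (PiM UNIV Mb) (\<lambda>x. \<lambda>i\<in>UNIV. x i) = PP"
    unfolding PP_def by (simp add: distr_id2)
  also have "\<dots> = PiM UNIV (\<lambda>i. distr PP (Mb i) (\<lambda>x. x i))"
    unfolding PP_def using PS.PiM_component by simp
  finally show ?thesis using P.indep_vars_iff_distr_eq_PiM[where I=UNIV and M'=Mb and X="\<lambda>i \<omega>. \<omega> i", OF UNIV_not_empty rv] by simp
qed

lemma tout_meas: "tout J \<in> borel_measurable (PiM (-J) Mb)"
  unfolding tout_def[abs_def]
proof (rule borel_measurable_suminf)
  fix j
  show "(\<lambda>f. if j \<notin> J \<and> f j then d j else 0) \<in> borel_measurable (PiM (-J) Mb)"
  proof (cases "j \<in> J")
    case True then show ?thesis by simp
  next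
    case False
    have "(\<lambda>f. f j) \<in> measurable (PiM (-J) Mb) (Mb j)"
      using False by (intro measurable_component_singleton) simp
    then have m: "(\<lambda>f. f j) \<in> measurable (PiM (-J) Mb) (count_space UNIV)"
      using measurable_cong_sets[of "PiM (-J) Mb" "PiM (-J) Mb" "Mb j" "count_space UNIV"] by simp
    have "(\<lambda>b::bool. if b then d j else 0) \<in> borel_measurable (count_space UNIV)" by simp
    from measurable_comp[OF m this] show ?thesis using False by (simp add: o_def)
  qed
qed

lemma tout_restrict: "tout J (restrict \<omega> (-J)) = tout J \<omega>"
  proof -
  have "(\<lambda>j. if j \<notin> J \<and> restrict \<omega> (-J) j then d j else 0) = (\<lambda>j. if j \<notin> J \<and> \<omega> j then d j else 0)"
    by (rule ext) (simp add: restrict_def)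
  then show ?thesis unfolding tout_def by simp
qed

lemma split_prob:
  assumes J: "finite J"
  shows "measure PP {\<omega>. (\<forall>i\<in>J. \<omega> i = c i) \<and> cis (2 * pi * tout J \<omega>) = y}
       = measure PP {\<omega>. \<forall>i\<in>J. \<omega> i \<in> {c i}} * measure PP {\<omega>. cis (2 * pi * tout J \<omega>) = y}"
proof -
  interpret P: prob_space PP by (rule prob_PP)
  define Yr where "Yr f = cis (2 * pi * tout J f)" for f
  have Yr_meas: "Yr \<in> borel_measurable (PiM (-J) Mb)" unfolding Yr_def[abs_def]
    using tout_meas[of J] unfolding cis_conv_exp by measurable
  have ind: "P.indep_var (PiM J Mb) (\<lambda>\<omega>. restrict \<omega> J) (PiM (-J) Mb) (\<lambda>\<omega>. restrict \<omega> (-J))"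
    using P.indep_var_restrict[OF indep_coords, of J "-J"] by simp
  have Xa: "PiE J (\<lambda>i. {c i}) \<in> sets (PiM J Mb)" using J by (intro sets_PiM_I_finite) auto
  have Xb: "Yr -` {y} \<inter> space (PiM (-J) Mb) \<in> sets (PiM (-J) Mb)"
    using measurable_sets[OF Yr_meas, of "{y}"] by simp
  note D = P.indep_varD[OF ind Xa Xb]
  have sp: "restrict \<omega> (-J) \<in> space (PiM (-J) Mb)" for \<omega>
    by (simp add: space_PiM Mb_def)
  have e1: "(\<lambda>x. (restrict x J, restrict x (-J))) -` (PiE J (\<lambda>i. {c i}) \<times> (Yr -` {y} \<inter> space (PiM (-J) Mb))) \<inter> space PP
     = {\<omega>. (\<forall>i\<in>J. \<omega> i = c i) \<and> cis (2 * pi * tout J \<omega>) = y}"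
    using space_PP sp by (auto simp: restrict_PiE_iff Yr_def tout_restrict)
  have e2: "(\<lambda>\<omega>. restrict \<omega> J) -` PiE J (\<lambda>i. {c i}) \<inter> space PP = {\<omega>. \<forall>i\<in>J. \<omega> i \<in> {c i}}"
    using space_PP by (auto simp: restrict_PiE_iff)
  have e3: "(\<lambda>\<omega>. restrict \<omega> (-J)) -` (Yr -` {y} \<inter> space (PiM (-J) Mb)) \<inter> space PP = {\<omega>. cis (2 * pi * tout J \<omega>) = y}"
    using space_PP sp by (auto simp: Yr_def tout_restrict)
  show ?thesis using D unfolding e1 e2 e3 .
qed


lemma tout_meas_PP[measurable]: "tout J \<in> borel_measurable PP"
  unfolding tout_def[abs_def]
proof (rule borel_measurable_suminf)
  fix j
  show "(\<lambda>\<omega>. if j \<notin> J \<and> \<omega> j then d j else 0) \<in> borel_measurable PP"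
  proof (cases "j \<in> J")
    case True then show ?thesis by simp
  next
    case False then show ?thesis using term_meas[of j "d j"] by simp
  qed
qed

lemma p_le1: "0 \<le> 1 - p j" using p_half[of j] by simp

lemma meas_B: "finite J \<Longrightarrow> measure PP {\<omega>. \<forall>i\<in>J. \<omega> i \<in> {c i}} = (\<Prod>i\<in>J. if c i then p i else 1 - p i)"
proof -
  assume J: "finite J"
  have nn: "\<And>i. 0 \<le> (if c i then p i else 1 - p i)" using p_pos p_le1 by (auto simp: less_imp_le)
  have "emeasure PP {\<omega>. \<forall>i\<in>J. \<omega> i \<in> {c i}} = (\<Prod>i\<in>J. ennreal (if c i then p i else 1 - p i))"
    by (subst emeasure_coll[OF J]) (simp add: pmf_Mb)
  also have "\<dots> = ennreal (\<Prod>i\<in>J. if c i then p i else 1 - p i)" using nn by (simp add: prod_ennreal)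
  finally show ?thesis unfolding measure_def using nn by (simp add: prod_nonneg)
qed

lemma meas_B_le: "finite J \<Longrightarrow> measure PP {\<omega>. \<forall>i\<in>J. \<omega> i \<in> {c i}} \<le> (\<Prod>i\<in>J. 1 - p i)"
proof -
  assume J: "finite J"
  have "(\<Prod>i\<in>J. if c i then p i else 1 - p i) \<le> (\<Prod>i\<in>J. 1 - p i)"
  proof (rule prod_mono)
    fix i
    show "0 \<le> (if c i then p i else 1 - p i) \<and> (if c i then p i else 1 - p i) \<le> 1 - p i"
      using p_pos[of i] p_half[of i] by auto
  qed
  then show ?thesis using meas_B[OF J] by simp
qed

lemma atom_bound:
  assumes J: "finite J" "\<And>i. i \<in> J \<Longrightarrow> 1 \<le> i"
  shows "measure PP {\<omega>. lam \<omega> = x} \<le> (\<Prod>i\<in>J. 1 - p i)"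
proof (cases "x = 0")
  case True
  have "lam \<omega> \<noteq> 0" for \<omega> using lam_norm[of \<omega>] by (metis norm_zero zero_neq_one)
  then have "{\<omega>. lam \<omega> = x} = {}" using True by simp
  moreover have "0 \<le> (\<Prod>i\<in>J. 1 - p i)" using p_le1 by (intro prod_nonneg) auto
  ultimately show ?thesis by simp
next
  case False
  interpret P: prob_space PP by (rule prob_PP)
  define C where "C = PiE J (\<lambda>_. UNIV :: bool set)"
  have finC: "finite C" unfolding C_def using J(1) by (simp add: finite_PiE)
  define v where "v c = x / cis (2 * pi * sJ J c)" for c :: "nat \<Rightarrow> bool"
  define Y where "Y c = {\<omega>. cis (2 * pi * tout J \<omega>) = v c}" for c :: "nat \<Rightarrow> bool"
  define Bc where "Bc c = {\<omega>. \<forall>i\<in>J. \<omega> i \<in> {c i}}" for c :: "nat \<Rightarrow> bool"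
  define Ev where "Ev c = {\<omega>. (\<forall>i\<in>J. \<omega> i = c i) \<and> cis (2 * pi * tout J \<omega>) = v c}" for c :: "nat \<Rightarrow> bool"
  define Q where "Q = (\<Prod>i\<in>J. 1 - p i)"
  have Ysets: "Y c \<in> sets PP" for c
  proof -
    have "(\<lambda>\<omega>. cis (2 * pi * tout J \<omega>)) \<in> borel_measurable PP" unfolding cis_conv_exp by measurable
    from measurable_sets[OF this, of "{v c}"] show ?thesis using space_PP unfolding Y_def by (simp add: vimage_def)
  qed
  have Evsets: "Ev c \<in> sets PP" for c
  proof -
    have "Ev c = Bc c \<inter> Y c" unfolding Ev_def Bc_def Y_def by auto
    moreover have "Bc c \<in> sets PP" unfolding Bc_def by (rule coll_sets[OF J(1)])
    ultimately show ?thesis using Ysets[of c] by (simp add: sets.Int)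
  qed
  have lamsets: "{\<omega>. lam \<omega> = x} \<in> sets PP"
    using measurable_sets[OF lam_meas, of "{x}"] space_PP by (simp add: vimage_def)
  have sub: "{\<omega>. lam \<omega> = x} \<subseteq> (\<Union>c\<in>C. Ev c)"
  proof
    fix \<omega> assume "\<omega> \<in> {\<omega>. lam \<omega> = x}"
    then have lx: "lam \<omega> = x" by simp
    define c where "c = restrict \<omega> J"
    have cC: "c \<in> C" unfolding c_def C_def by simp
    have sc: "sJ J c = sJ J \<omega>" unfolding sJ_def c_def by (rule sum.cong) auto
    have "lam \<omega> = cis (2 * pi * t \<omega>)" unfolding lam_def by (simp add: cis_conv_exp mult.commute)
    also have "2 * pi * t \<omega> = 2 * pi * sJ J \<omega> + 2 * pi * tout J \<omega>"
      using t_split[OF J(1), of \<omega>] by (simp add: distrib_left)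
    finally have "lam \<omega> = cis (2 * pi * sJ J \<omega>) * cis (2 * pi * tout J \<omega>)" by (simp add: cis_mult)
    then have "cis (2 * pi * tout J \<omega>) * cis (2 * pi * sJ J \<omega>) = x" using lx by (simp add: mult.commute)
    then have "cis (2 * pi * tout J \<omega>) = v c" unfolding v_def sc
      by (simp add: eq_divide_eq)
    moreover have "\<forall>i\<in>J. \<omega> i = c i" unfolding c_def by simp
    ultimately have "\<omega> \<in> Ev c" unfolding Ev_def by simp
    then show "\<omega> \<in> (\<Union>c\<in>C. Ev c)" using cC by blast
  qed
  have "measure PP {\<omega>. lam \<omega> = x} \<le> measure PP (\<Union>c\<in>C. Ev c)"
    using sub Evsets finC by (intro P.finite_measure_mono) auto
  also have "\<dots> \<le> (\<Sum>c\<in>C. measure PP (Ev c))"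
    using finC Evsets by (intro P.finite_measure_subadditive_finite) auto
  also have "\<dots> \<le> (\<Sum>c\<in>C. Q * measure PP (Y c))"
  proof (rule sum_mono)
    fix c assume "c \<in> C"
    have "measure PP (Ev c) = measure PP (Bc c) * measure PP (Y c)"
      unfolding Ev_def Bc_def Y_def by (rule split_prob[OF J(1)])
    also have "\<dots> \<le> Q * measure PP (Y c)"
      unfolding Bc_def Q_def by (intro mult_right_mono meas_B_le J(1)) simp
    finally show "measure PP (Ev c) \<le> Q * measure PP (Y c)" .
  qed
  also have "\<dots> = Q * (\<Sum>c\<in>C. measure PP (Y c))" by (simp add: sum_distrib_left)
  also have "(\<Sum>c\<in>C. measure PP (Y c)) \<le> 1"
  proof -
    define Dm where "Dm = distr PP borel (\<lambda>\<omega>. cis (2 * pi * tout J \<omega>))"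
    have Ym: "(\<lambda>\<omega>. cis (2 * pi * tout J \<omega>)) \<in> borel_measurable PP" unfolding cis_conv_exp by measurable
    interpret D: prob_space Dm unfolding Dm_def by (rule P.prob_space_distr[OF Ym])
    have mY: "measure PP (Y c) = measure Dm {v c}" for c
      unfolding Dm_def Y_def using Ym space_PP by (simp add: measure_distr vimage_def)
    have inj: "inj_on v C"
    proof (rule inj_onI)
      fix c c' assume cC: "c \<in> C" "c' \<in> C" and eq: "v c = v c'"
      then have "cis (2 * pi * sJ J c) = cis (2 * pi * sJ J c')"
        unfolding v_def using False by (auto simp: frac_eq_eq)
      then have Z: "sJ J c - sJ J c' \<in> \<int>" by (rule cis_inj)
      have "\<forall>i\<in>J. c i = c' i"
      proof (rule ccontr)
        assume "\<not> (\<forall>i\<in>J. c i = c' i)"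
        then obtain i0 where i0: "i0 \<in> J" "c i0 \<noteq> c' i0" by auto
        have "sJ J c - sJ J c' \<notin> \<int>" unfolding sJ_def by (rule sdiff[of J i0 c c', OF J(1) J(2) i0])
        then show False using Z by simp
      qed
      then show "c = c'" using cC unfolding C_def by (auto intro: PiE_ext)
    qed
    have "(\<Sum>c\<in>C. measure PP (Y c)) = (\<Sum>c\<in>C. measure Dm {v c})" using mY by simp
    also have "\<dots> = (\<Sum>w\<in>v ` C. measure Dm {w})" using sum.reindex[OF inj, of "\<lambda>w. measure Dm {w}"] by simp
    also have "\<dots> = measure Dm (v ` C)"
      using finC by (intro D.finite_measure_eq_sum_singleton[symmetric]) (auto simp: Dm_def)
    also have "\<dots> \<le> 1" by (rule D.prob_le_1)
    finally show ?thesis .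
  qed
  then have "Q * (\<Sum>c\<in>C. measure PP (Y c)) \<le> Q * 1"
    unfolding Q_def using p_le1 by (intro mult_left_mono prod_nonneg) auto
  finally show ?thesis unfolding Q_def by simp
qed


lemma p_nsumm: "\<not> summable p"
proof
  assume sp: "summable p"
  have "eventually (\<lambda>j. a j < 7/2) sequentially" using alim by (rule order_tendstoD(2)) simp
  then have "eventually (\<lambda>j. p j = (1/7) * a j) sequentially"
    by eventually_elim (simp add: p_def)
  then have "summable p = summable (\<lambda>j. (1/7) * a j)" by (rule summable_cong)
  then have "summable (\<lambda>j. (1/7::real) * a j)" using sp by simp
  then have "summable a" by (simp add: summable_cmult_iff)
  then show False using adiv by simp
qed

lemma psum_big: "\<exists>m. B < (\<Sum>i\<in>{1..<m}. p i)"
proof (rule ccontr)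
  assume "\<not> (\<exists>m. B < (\<Sum>i\<in>{1..<m}. p i))"
  then have le: "(\<Sum>i\<in>{1..<m}. p i) \<le> B" for m by (simp add: not_less)
  have "(\<Sum>i<m. p i) \<le> B + p 0" for m
  proof -
    have "{..<m} \<subseteq> insert 0 {1..<m}" by auto
    then have "(\<Sum>i<m. p i) \<le> (\<Sum>i\<in>insert 0 {1..<m}. p i)"
      by (intro sum_mono2) (auto simp: less_imp_le[OF p_pos])
    also have "\<dots> = p 0 + (\<Sum>i\<in>{1..<m}. p i)" by simp
    finally show ?thesis using le[of m] by simp
  qed
  then have "summable p" by (intro summableI_nonneg_bounded[where x="B + p 0"]) (auto simp: less_imp_le[OF p_pos])
  then show False using p_nsumm by simp
qed

lemma sig_atomless: "atomless sig"
  unfolding atomless_def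
proof
  fix x
  interpret P: prob_space PP by (rule prob_PP)
  define \<mu> where "\<mu> = measure PP {\<omega>. lam \<omega> = x}"
  have e: "emeasure sig {x} = emeasure PP {\<omega>. lam \<omega> = x}"
    unfolding sig_def using space_PP by (simp add: emeasure_distr vimage_def)
  have "\<mu> = 0"
  proof (rule ccontr)
    assume "\<mu> \<noteq> 0"
    then have mpos: "\<mu> > 0" unfolding \<mu>_def by (simp add: zero_less_measure_iff)
    obtain m where m: "- ln \<mu> < (\<Sum>i\<in>{1..<m}. p i)" using psum_big by blast
    have "\<mu> \<le> (\<Prod>i\<in>{1..<m}. 1 - p i)" unfolding \<mu>_def by (rule atom_bound) auto
    also have "\<dots> \<le> (\<Prod>i\<in>{1..<m}. exp (- p i))"
    proof (rule prod_mono)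
      fix i show "0 \<le> 1 - p i \<and> 1 - p i \<le> exp (- p i)"
        using p_le1[of i] exp_ge_add_one_self[of "- p i"] by simp
    qed
    also have "\<dots> = exp (- (\<Sum>i\<in>{1..<m}. p i))" using exp_sum[of "{1..<m}" "\<lambda>i. - p i"] by (simp add: sum_negf)
    also have "\<dots> < exp (ln \<mu>)" using m by simp
    also have "\<dots> = \<mu>" using mpos by simp
    finally show False by simp
  qed
  then show "emeasure sig {x} = 0" using e unfolding \<mu>_def by (simp add: P.emeasure_eq_measure)
qed

end

theorem mainTheorem11:
  fixes n :: "nat \<Rightarrow> nat" and a :: "nat \<Rightarrow> real"
  assumes "strict_mono n"
    and "\<And>k. n k > 0"
    and "\<And>k. n k dvd n (Suc k)"
    and "\<And>k. a k > 0"
    and "decseq a"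
    and "a \<longlonglongrightarrow> 0"
    and "\<not> summable a"
  shows "\<exists>\<sigma>. borel_prob_on_T \<sigma> \<and> atomless \<sigma> \<and>
           (\<forall>k. cmod (fourier_coeff \<sigma> (n k) - 1) \<le> a k)"
proof -
  interpret C: constr n a using assms by unfold_locales
  show ?thesis using C.sig_prob C.sig_atomless C.fourier_bound by blast
qed

end
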